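(* Let $m,p>-1$ be real and $k\in\mathbb{C}$ with $\operatorname{Re}k>-2$. Then $$\int_{0}^{1}\frac{\log^{k+1}(x)\,(x^m-x^p)}{(x^{m+1}+1)(x^{p+1}+1)}\,dx=-2^{-k-1}\left(2^{k+1}-1\right)e^{\frac{i\pi k}{2}}\,\zeta(k+2)\,\Gamma(k+2)\left(\frac{\left(\frac{i}{m+1}\right)^k}{(m+1)^2}-\frac{\left(\frac{i}{p+1}\right)^k}{(p+1)^2}\right).$$
   Context: For $x\in(0,1)$, $\log^{s}(x)=e^{s\log(\log x)}$ with $\log(\log x)=\log|\log x|+i\pi$; all powers are principal, so $\left(\frac{i}{q}\right)^k=e^{i\pi k/2}q^{-k}$ for $q>0$. $\zeta$ is the Riemann zeta function. *)

theory Defs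
  imports "HOL-Analysis.Analysis"
begin

text \<open>For Re s > 1 it is the Dirichlet series; for
  0 < Re s \<le> 1, s \<noteq> 1, it is given by the standard analytic continuation
  zeta s = s/(s-1) - s * integral from 1 to infinity of frac(x) x^(-s-1) dx
  (Titchmarsh, eq. 2.1.5). Only values with Re s > 0 are used below.\<close>
definition zeta :: "complex \<Rightarrow> complex" where
  "zeta s = (if Re s > 1 then (\<Sum>n. 1 / (of_nat (Suc n)) powr s)
             else s / (s - 1) - s * integral {1..}
                    (\<lambda>x::real. of_real (frac x) * (of_real x) powr (- s - 1)))"

end

theory Submission
  imports Defs
begin



lemma cpow_pos: "r > 0 \<Longrightarrow> complex_of_real r powr w = exp (w * of_real (ln r))"
  by (simp add: powr_def Ln_of_real)

lemma image_exp_neg: assumes "b > 0" shows "(\<lambda>t. exp (- t / b)) ` {0<..} = {0<..<(1::real)}"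
proof
  show "(\<lambda>t. exp (- t / b)) ` {0<..} \<subseteq> {0<..<1}" using assms by (auto simp: field_simps)
  show "{0<..<1} \<subseteq> (\<lambda>t. exp (- t / b)) ` {0<..}"
  proof
    fix y :: real assume y: "y \<in> {0<..<1}"
    have "y = exp (- (- b * ln y) / b)" using y assms by simp
    moreover have "- b * ln y > 0" using y assms by (simp add: mult_pos_neg ln_less_zero)
    ultimately show "y \<in> (\<lambda>t. exp (- t / b)) ` {0<..}" by blast
  qed
qed

lemma mellin_log:
  fixes b :: real and z :: complex
  assumes b: "b > 0" and z: "Re z > 0"
  shows "(\<lambda>x. of_real (- ln x) powr (z - 1) * of_real (x powr (b - 1))) absolutely_integrable_on {0<..<1}
       \<and> integral {0<..<1} (\<lambda>x. of_real (- ln x) powr (z - 1) * of_real (x powr (b - 1))) = Gamma z / of_real b powr z"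
proof -
  define f where "f = (\<lambda>x::real. of_real (- ln x) powr (z - 1) * complex_of_real (x powr (b - 1)))"
  define C where "C = exp (- z * of_real (ln b))"
  have eq: "\<bar>- exp (- t / b) / b\<bar> *\<^sub>R f (exp (- t / b)) = C * (of_real t powr (z - 1) / of_real (exp t))"
    if t: "t \<in> {0<..}" for t
  proof -
    have t0: "t > 0" using t by simp
    have "\<bar>- exp (- t / b) / b\<bar> = exp (- t / b) / b" using b by simp
    moreover have "f (exp (- t / b)) = exp ((z - 1) * of_real (ln (t / b))) * of_real (exp (- t / b * (b - 1)))"
    proof -
      have "f (exp (- t / b)) = of_real (t / b) powr (z - 1) * of_real (exp (- t / b * (b - 1)))"
        unfolding f_def by (simp add: powr_def mult.commute)
      also have "of_real (t / b) powr (z - 1) = exp ((z - 1) * of_real (ln (t / b)))"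
        using t0 b by (intro cpow_pos) simp
      finally show ?thesis .
    qed
    moreover have "ln (t / b) = ln t - ln b" using t0 b by (simp add: ln_div)
    ultimately have "\<bar>- exp (- t / b) / b\<bar> *\<^sub>R f (exp (- t / b)) =
       of_real (exp (- t / b) / b) * (exp ((z - 1) * (of_real (ln t) - of_real (ln b))) * of_real (exp (- t / b * (b - 1))))"
      by (simp add: scaleR_conv_of_real)
    also have "of_real (exp (- t / b) / b) = exp (of_real (- t / b) - of_real (ln b))"
      using b by (subst of_real_diff[symmetric], subst exp_of_real) (simp add: exp_diff)
    also have "complex_of_real (exp (- t / b * (b - 1))) = exp (of_real (- t / b * (b - 1)))"
      by (simp only: exp_of_real)
    also have "exp (of_real (- t / b) - of_real (ln b)) * (exp ((z - 1) * (of_real (ln t) - of_real (ln b))) * exp (of_real (- t / b * (b - 1))))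
       = exp ((of_real (- t / b) - of_real (ln b)) + ((z - 1) * (of_real (ln t) - of_real (ln b))) + of_real (- t / b * (b - 1)))"
      by (simp only: exp_add mult.assoc)
    also have "(of_real (- t / b) - of_real (ln b)) + ((z - 1) * (of_real (ln t) - of_real (ln b))) + of_real (- t / b * (b - 1))
        = (- z * of_real (ln b)) + ((z - 1) * of_real (ln t) - of_real t)"
      using b by (simp add: field_simps)
    also have "exp ((- z * of_real (ln b)) + ((z - 1) * of_real (ln t) - of_real t)) = C * (of_real t powr (z - 1) / of_real (exp t))"
      unfolding C_def using t0 by (simp add: cpow_pos exp_add exp_diff exp_of_real exp_minus field_simps)
    finally show ?thesis .
  qed
  have der: "((\<lambda>t. exp (- t / b)) has_field_derivative (- exp (- t / b) / b)) (at t within {0<..})" for t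
    using b by (auto intro!: derivative_eq_intros)
  have inj: "inj_on (\<lambda>t. exp (- t / b)) {0<..}" using b by (auto simp: inj_on_def)
  have G: "(\<lambda>t. C * (of_real t powr (z - 1) / of_real (exp t))) absolutely_integrable_on {0<..}"
    using absolutely_integrable_Gamma_integral'[OF z] by (rule set_integrable_mult_right)
  have G2: "integral {0<..} (\<lambda>t. C * (of_real t powr (z - 1) / of_real (exp t))) = C * Gamma z"
    using Gamma_integral_complex'[OF z] by (intro integral_unique has_integral_mult_right)
  have main: "(\<lambda>t. \<bar>- exp (- t / b) / b\<bar> *\<^sub>R f (exp (- t / b))) absolutely_integrable_on {0<..}
      \<and> integral {0<..} (\<lambda>t. \<bar>- exp (- t / b) / b\<bar> *\<^sub>R f (exp (- t / b))) = C * Gamma z"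
  proof
    show "(\<lambda>t. \<bar>- exp (- t / b) / b\<bar> *\<^sub>R f (exp (- t / b))) absolutely_integrable_on {0<..}"
    proof -
      have "set_integrable lebesgue {0<..} (\<lambda>t. \<bar>- exp (- t / b) / b\<bar> *\<^sub>R f (exp (- t / b)))
          = set_integrable lebesgue {0<..} (\<lambda>t. C * (of_real t powr (z - 1) / of_real (exp t)))"
        by (rule set_integrable_cong) (simp_all only: eq refl)
      with G show ?thesis by simp
    qed
    show "integral {0<..} (\<lambda>t. \<bar>- exp (- t / b) / b\<bar> *\<^sub>R f (exp (- t / b))) = C * Gamma z"
      using G2 by (metis (no_types, lifting) eq integral_cong)
  qed
  have "f absolutely_integrable_on {0<..<1} \<and> integral {0<..<1} f = C * Gamma z"
  proof -
    have cv: "(\<lambda>t. \<bar>- exp (- t / b) / b\<bar> *\<^sub>R f (exp (- t / b))) absolutely_integrable_on {0<..}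
      \<and> integral {0<..} (\<lambda>t. \<bar>- exp (- t / b) / b\<bar> *\<^sub>R f (exp (- t / b))) = C * Gamma z
      \<longleftrightarrow> f absolutely_integrable_on (\<lambda>t. exp (- t / b)) ` {0<..} \<and> integral ((\<lambda>t. exp (- t / b)) ` {0<..}) f = C * Gamma z"
      by (rule has_absolute_integral_change_of_variables_real[OF _ der inj]) simp
    from cv main show ?thesis unfolding image_exp_neg[OF b] by blast
  qed
  moreover have "C * Gamma z = Gamma z / of_real b powr z"
    unfolding C_def using b by (simp add: cpow_pos exp_minus field_simps)
  ultimately show ?thesis unfolding f_def by simp
qed




lemma ftc_piece:
  fixes s :: complex and N :: nat
  assumes s: "Re s > 0" "s \<noteq> 1" and N: "N \<ge> 1"
  shows "((\<lambda>x. of_real (x - real N) * of_real x powr (- s - 1)) has_integral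
     ((of_real (real N + 1) powr (1 - s) / (1 - s) + of_nat N * of_real (real N + 1) powr (- s) / s)
      - (of_real (real N) powr (1 - s) / (1 - s) + of_nat N * of_real (real N) powr (- s) / s))) {real N..real N + 1}"
proof -
  have s0: "s \<noteq> 0" using s by auto
  have s1: "1 - s \<noteq> 0" using s by auto
  show ?thesis
  proof (rule fundamental_theorem_of_calculus_interior)
    show "real N \<le> real N + 1" by simp
    show "continuous_on {real N..real N + 1}
      (\<lambda>x. of_real x powr (1 - s) / (1 - s) + of_nat N * of_real x powr (- s) / s)"
      using N s0 s1 by (intro continuous_intros) auto
    fix x assume x: "x \<in> {real N<..<real N + 1}"
    hence x0: "x > 0" using N by auto
    have "((\<lambda>x. of_real x powr (1 - s) / (1 - s) + of_nat N * of_real x powr (- s) / s) has_vector_derivative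
       ((1 - s) * of_real x powr (1 - s - 1) / (1 - s) + of_nat N * ((- s) * of_real x powr (- s - 1)) / s)) (at x)"
      using x0 by (auto intro!: derivative_eq_intros has_vector_derivative_real_field)
    also have "(1 - s) * of_real x powr (1 - s - 1) / (1 - s) + of_nat N * ((- s) * of_real x powr (- s - 1)) / s
       = of_real (x - real N) * of_real x powr (- s - 1)"
      using x0 s0 s1 by (simp add: cpow_pos field_simps exp_diff exp_of_real)
    finally show "((\<lambda>x. of_real x powr (1 - s) / (1 - s) + of_nat N * of_real x powr (- s) / s) has_vector_derivative
       of_real (x - real N) * of_real x powr (- s - 1)) (at x)" .
  qed
qed




lemma cpow_one_minus: "r > 0 \<Longrightarrow> complex_of_real r powr (1 - s) = of_real r * of_real r powr (- s)"
proof -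
  assume r: "r > 0"
  have "complex_of_real r powr (1 - s) = exp (of_real (ln r) + (- s) * of_real (ln r))"
    using r by (simp add: cpow_pos algebra_simps)
  also have "\<dots> = of_real r * of_real r powr (- s)"
    using r by (simp only: exp_add) (simp add: cpow_pos exp_of_real)
  finally show ?thesis .
qed

lemma zeta_alg: fixes s A B Q Q' a b n :: complex
  assumes "s \<noteq> 0" "s \<noteq> 1" "A = (n + 1) * a" "B = n * b" "Q' = Q + a"
  shows "(s / (s - 1) - (Q - B / (1 - s))) / s + ((A / (1 - s) + n * a / s) - (B / (1 - s) + n * b / s))
      = (s / (s - 1) - (Q' - A / (1 - s))) / s"
proof -
  have d: "1 - s \<noteq> 0" "s - 1 \<noteq> 0" using assms by auto
  have e: "\<And>X. X / (1 - s) = - X / (s - 1)" using d by (simp add: field_simps)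
  show ?thesis unfolding e using assms(1) d(2) assms(3-5) 
    by (simp add: divide_simps) (simp add: algebra_simps)
qed

definition Psum :: "complex \<Rightarrow> nat \<Rightarrow> complex" where
  "Psum s N = (\<Sum>n<N. 1 / of_nat (Suc n) powr s)"

lemma zeta_partial:
  fixes s :: complex and N :: nat
  assumes s: "Re s > 0" "s \<noteq> 1" and N: "N \<ge> 1"
  shows "((\<lambda>x. of_real (frac x) * of_real x powr (- s - 1)) has_integral
     (s / (s - 1) - (Psum s N - of_real (real N) powr (1 - s) / (1 - s))) / s) {1..real N}"
  using N
proof (induction N rule: nat_induct_at_least)
  case base
  have s0: "s \<noteq> 0" using s by auto
  have s1: "1 - s \<noteq> 0" "s - 1 \<noteq> 0" using s by auto
  have "(s / (s - 1) - (Psum s 1 - of_real (real 1) powr (1 - s) / (1 - s))) / s = 0"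
    using s0 s1 by (simp add: Psum_def field_simps)
  moreover have "((\<lambda>x. of_real (frac x) * of_real x powr (- s - 1)) has_integral 0) {1..real 1}"
    by (simp add: has_integral_refl)
  ultimately show ?case by (simp only:)
next
  case (Suc N)
  have s0: "s \<noteq> 0" using s by auto
  have s1: "1 - s \<noteq> 0" "s - 1 \<noteq> 0" using s by auto
  have piece: "((\<lambda>x. of_real (frac x) * of_real x powr (- s - 1)) has_integral
     ((of_real (real N + 1) powr (1 - s) / (1 - s) + of_nat N * of_real (real N + 1) powr (- s) / s)
      - (of_real (real N) powr (1 - s) / (1 - s) + of_nat N * of_real (real N) powr (- s) / s))) {real N..real N + 1}"
  proof (rule has_integral_spike_finite[OF _ _ ftc_piece[OF s Suc.hyps], of "{real N + 1}"])
    show "finite {real N + 1}" by simp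
    fix x assume x: "x \<in> {real N..real N + 1} - {real N + 1}"
    have "\<lfloor>x\<rfloor> = int N" using x by (intro floor_unique) auto
    hence "frac x = x - real N" by (simp add: frac_def)
    thus "of_real (frac x) * complex_of_real x powr (- s - 1) = of_real (x - real N) * of_real x powr (- s - 1)"
      by simp
  qed
  have "((\<lambda>x. of_real (frac x) * of_real x powr (- s - 1)) has_integral
     (s / (s - 1) - (Psum s N - of_real (real N) powr (1 - s) / (1 - s))) / s +
     ((of_real (real N + 1) powr (1 - s) / (1 - s) + of_nat N * of_real (real N + 1) powr (- s) / s)
      - (of_real (real N) powr (1 - s) / (1 - s) + of_nat N * of_real (real N) powr (- s) / s))) {1..real N + 1}"
    using Suc.hyps by (intro has_integral_combine[OF _ _ Suc.IH piece]) auto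
  moreover have "(s / (s - 1) - (Psum s N - of_real (real N) powr (1 - s) / (1 - s))) / s +
     ((of_real (real N + 1) powr (1 - s) / (1 - s) + of_nat N * of_real (real N + 1) powr (- s) / s)
      - (of_real (real N) powr (1 - s) / (1 - s) + of_nat N * of_real (real N) powr (- s) / s))
     = (s / (s - 1) - (Psum s (Suc N) - of_real (real (Suc N)) powr (1 - s) / (1 - s))) / s"
  proof -
    have e1: "of_real (real N + 1) powr (1 - s) = (of_nat N + 1) * of_real (real N + 1) powr (- s)"
      using cpow_one_minus[of "real N + 1" s] by simp
    have e2: "of_real (real N) powr (1 - s) = of_nat N * of_real (real N) powr (- s)"
      using Suc.hyps cpow_one_minus[of "real N" s] by simp
    have e3: "Psum s (Suc N) = Psum s N + of_real (real N + 1) powr (- s)"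
      by (simp add: Psum_def add.commute powr_minus divide_inverse)
    have alg: "\<And>A B Q Q' a b n. A = (n + 1) * a \<Longrightarrow> B = n * b \<Longrightarrow> Q' = Q + a \<Longrightarrow>
      (s / (s - 1) - (Q - B / (1 - s))) / s + ((A / (1 - s) + n * a / s) - (B / (1 - s) + n * b / s))
      = (s / (s - 1) - (Q' - A / (1 - s))) / s"
      using s0 s(2) by (rule zeta_alg)
    have "real (Suc N) = real N + 1" by simp
    show ?thesis unfolding \<open>real (Suc N) = real N + 1\<close>
      by (rule alg[OF e1 e2 e3])
  qed
  ultimately show ?case by (simp add: add.commute)
qed




lemma zeta_limit:
  fixes s :: complex
  assumes s: "Re s > 0" "s \<noteq> 1"
  defines "g \<equiv> (\<lambda>x::real. of_real (frac x) * (of_real x) powr (- s - 1))"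
  shows "(\<lambda>N. Psum s N - of_real (real N) powr (1 - s) / (1 - s)) \<longlonglongrightarrow> s / (s - 1) - s * integral {1..} g"
    and "zeta s = s / (s - 1) - s * integral {1..} g"
proof -
  define J where "J = (\<lambda>N. (s / (s - 1) - (Psum s N - of_real (real N) powr (1 - s) / (1 - s))) / s)"
  define fk where "fk = (\<lambda>k::nat. \<lambda>x. if x \<in> {..real k} then g x else 0)"
  define h where "h = (\<lambda>x::real. x powr (- Re s - 1))"
  have s0: "s \<noteq> 0" using s by auto
  have gk: "(g has_integral J k) {1..real k}" if "k \<ge> 1" for k
    unfolding g_def J_def using zeta_partial[OF s that] .
  have fk_int: "(fk k has_integral J k) {1..}" if "k \<ge> 1" for k
  proof -
    have "{..real k} \<inter> {1..} = {1..real k}" by auto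
    thus ?thesis unfolding fk_def using gk[OF that] has_integral_restrict_Int[of "{..real k}" g "J k" "{1..}"] by simp
  qed
  have fk_int': "fk k integrable_on {1..}" for k
  proof (cases "k \<ge> 1")
    case True thus ?thesis using fk_int by blast
  next
    case False
    hence "k = 0" by simp
    hence "fk k = (\<lambda>x. if x \<in> {..0} then g x else 0)" unfolding fk_def by simp
    moreover have "(g has_integral 0) ({..0} \<inter> {1..})"
      by (subgoal_tac "{..0} \<inter> {1..} = ({}::real set)") auto
    ultimately show ?thesis using has_integral_restrict_Int[of "{..0}" g 0 "{1..}"] by (auto simp: integrable_on_def)
  qed
  have h_int: "h integrable_on {1..}"
    unfolding h_def using has_integral_powr_to_inf[of "- Re s - 1" 1] s by auto
  have bound: "norm (fk k x) \<le> h x" if "x \<in> {1..}" for k x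
  proof -
    have x1: "x \<ge> 1" using that by simp
    have "norm (g x) = \<bar>frac x\<bar> * x powr (- Re s - 1)"
      unfolding g_def using x1 by (simp add: norm_mult norm_powr_real_powr)
    also have "\<dots> \<le> 1 * x powr (- Re s - 1)"
      using frac_lt_1[of x] frac_ge_0[of x] by (intro mult_right_mono) auto
    finally have "norm (g x) \<le> h x" unfolding h_def by simp
    moreover have "h x \<ge> 0" unfolding h_def by simp
    ultimately show ?thesis unfolding fk_def by auto
  qed
  have pw: "(\<lambda>k. fk k x) \<longlonglongrightarrow> g x" if "x \<in> {1..}" for x
  proof (rule tendsto_eventually)
    have "eventually (\<lambda>k. k \<ge> nat \<lceil>x\<rceil>) sequentially" by (rule eventually_ge_at_top)
    thus "eventually (\<lambda>k. fk k x = g x) sequentially"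
      by eventually_elim (auto simp: fk_def dest!: le_nat_iff[THEN iffD1] intro: order.trans[OF le_of_int_ceiling])
  qed
  have DC: "(\<lambda>k. integral {1..} (fk k)) \<longlonglongrightarrow> integral {1..} g"
    using dominated_convergence(2)[OF fk_int' h_int bound pw] .
  have "eventually (\<lambda>k. integral {1..} (fk k) = J k) sequentially"
    using eventually_ge_at_top[of 1] by eventually_elim (use fk_int in \<open>simp add: integral_unique\<close>)
  hence JL: "J \<longlonglongrightarrow> integral {1..} g" using DC tendsto_cong by fastforce
  have "(\<lambda>N. s / (s - 1) - s * J N) \<longlonglongrightarrow> s / (s - 1) - s * integral {1..} g"
    by (intro tendsto_intros JL)
  moreover have "s / (s - 1) - s * J N = Psum s N - of_real (real N) powr (1 - s) / (1 - s)" for N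
    unfolding J_def using s0 by simp
  ultimately show L: "(\<lambda>N. Psum s N - of_real (real N) powr (1 - s) / (1 - s)) \<longlonglongrightarrow> s / (s - 1) - s * integral {1..} g"
    by simp
  show "zeta s = s / (s - 1) - s * integral {1..} g"
  proof (cases "Re s > 1")
    case False thus ?thesis unfolding zeta_def g_def by simp
  next
    case True
    have "(\<lambda>N. norm (of_real (real N) powr (1 - s))) \<longlonglongrightarrow> 0"
    proof -
      have "(\<lambda>N. real N powr Re (1 - s)) \<longlonglongrightarrow> 0"
        using True by (intro tendsto_neg_powr filterlim_real_sequentially) auto
      moreover have "norm (of_real (real N) powr (1 - s)) = real N powr Re (1 - s)" for N
        by (simp add: norm_powr_real_powr)
      ultimately show ?thesis by simp
    qed
    hence "(\<lambda>N. of_real (real N) powr (1 - s) / (1 - s)) \<longlonglongrightarrow> 0 / (1 - s)"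
      using s(2) by (intro tendsto_intros) (simp_all add: tendsto_norm_zero_iff)
    from tendsto_add[OF L this] have "(\<lambda>N. Psum s N) \<longlonglongrightarrow> s / (s - 1) - s * integral {1..} g"
      by simp
    hence "(\<lambda>n. 1 / of_nat (Suc n) powr s) sums (s / (s - 1) - s * integral {1..} g)"
      unfolding sums_def Psum_def .
    thus ?thesis using True unfolding zeta_def g_def by (simp add: sums_unique[symmetric])
  qed
qed




lemma eta_sum_eq:
  fixes s :: complex
  shows "(\<Sum>n<2*N. (-1)^n / of_nat (Suc n) powr s) = Psum s (2*N) - (2::complex) powr (1 - s) * Psum s N"
proof (induction N)
  case 0 thus ?case by (simp add: Psum_def)
next
  case (Suc N)
  have two: "(2::complex) powr (1 - s) = 2 * 2 powr (- s)"
    using cpow_one_minus[of 2 s] by simp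
  have pw: "of_nat (Suc (Suc (2 * N))) powr s = (2::complex) powr s * of_nat (Suc N) powr s"
  proof -
    have "(of_nat (Suc (Suc (2 * N))) :: complex) = 2 * of_nat (Suc N)" by simp
    thus ?thesis by (simp only: ) (rule powr_times_real, auto)
  qed
  have e: "1 / of_nat (Suc (Suc (2 * N))) powr s = 2 powr (- s) * (1 / of_nat (Suc N) powr s)"
    unfolding pw by (simp add: powr_minus divide_inverse)
  have "(\<Sum>n<2 * Suc N. (-1)^n / of_nat (Suc n) powr s :: complex) =
      (\<Sum>n<2*N. (-1)^n / of_nat (Suc n) powr s) + 1 / of_nat (Suc (2 * N)) powr s - 1 / of_nat (Suc (Suc (2 * N))) powr s"
    by simp
  moreover have "Psum s (2 * Suc N) = Psum s (2 * N) + 1 / of_nat (Suc (2 * N)) powr s + 1 / of_nat (Suc (Suc (2 * N))) powr s"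
    by (simp add: Psum_def)
  moreover have "Psum s (Suc N) = Psum s N + 1 / of_nat (Suc N) powr s"
    by (simp add: Psum_def)
  ultimately show ?case unfolding Suc.IH two e by (simp add: algebra_simps)
qed

lemma eta_limit:
  fixes s :: complex
  assumes s: "Re s > 0" "s \<noteq> 1"
  shows "(\<lambda>N. \<Sum>n<2*N. (-1)^n / of_nat (Suc n) powr s) \<longlonglongrightarrow> (1 - 2 powr (1 - s)) * zeta s"
proof -
  define Z where "Z = (\<lambda>N. Psum s N - of_real (real N) powr (1 - s) / (1 - s))"
  have L: "Z \<longlonglongrightarrow> zeta s" unfolding Z_def using zeta_limit[OF s] by simp
  have L2: "(\<lambda>N. Z (2 * N)) \<longlonglongrightarrow> zeta s"
    using LIMSEQ_subseq_LIMSEQ[OF L, of "\<lambda>N. 2 * N"] by (simp add: strict_mono_def o_def)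
  have "(\<lambda>N. Z (2 * N) - 2 powr (1 - s) * Z N) \<longlonglongrightarrow> zeta s - 2 powr (1 - s) * zeta s"
    by (intro tendsto_intros L L2)
  moreover have "Z (2 * N) - 2 powr (1 - s) * Z N = (\<Sum>n<2*N. (-1)^n / of_nat (Suc n) powr s)" for N
  proof -
    have "complex_of_real (real (2 * N)) powr (1 - s) = 2 powr (1 - s) * of_real (real N) powr (1 - s)"
      by (simp add: powr_times_real)
    thus ?thesis unfolding Z_def eta_sum_eq by (simp add: algebra_simps)
  qed
  ultimately show ?thesis by (simp add: algebra_simps)
qed




lemma geo_split:
  fixes y :: real assumes "y \<ge> 0"
  shows "1 / (y + 1) = (\<Sum>j<2*N. (-1)^j * y^j) + y^(2*N) / (y + 1)"
proof -
  have "(\<Sum>j<2*N. (-1)^j * y^j) * (y + 1) = 1 - y^(2*N)"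
    by (induction N) (simp_all add: algebra_simps)
  thus ?thesis using assms by (simp add: field_simps)
qed

lemma cont_P: "continuous_on {0<..<1::real} (\<lambda>x. complex_of_real (- ln x) powr w)"
  by (intro continuous_intros) (auto simp: ln_less_zero)




lemma div_le_one_aux: fixes c d :: real assumes "c \<le> 1" "1 \<le> d" shows "c / d \<le> 1"
  using assms by (auto simp: divide_le_eq_1)

lemma mellin_log_has:
  fixes b :: real and z :: complex
  assumes b: "b > 0" and z: "Re z > 0"
  shows "((\<lambda>x. of_real (- ln x) powr (z - 1) * of_real (x powr (b - 1))) has_integral Gamma z / of_real b powr z) {0<..<1}"
proof -
  from mellin_log[OF b z] have h: "(\<lambda>x. of_real (- ln x) powr (z - 1) * of_real (x powr (b - 1))) absolutely_integrable_on {0<..<1}"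
    and e: "integral {0<..<1} (\<lambda>x. of_real (- ln x) powr (z - 1) * of_real (x powr (b - 1))) = Gamma z / of_real b powr z"
    by auto
  from h have "(\<lambda>x. of_real (- ln x) powr (z - 1) * of_real (x powr (b - 1))) integrable_on {0<..<1}"
    unfolding absolutely_integrable_on_def by blast
  from integrable_integral[OF this] show ?thesis unfolding e .
qed

lemma log_int_piece:
  fixes a :: real and s :: complex
  assumes a: "a > 0" and s: "Re s > 0" "s \<noteq> 1"
  shows "((\<lambda>x. of_real (- ln x) powr (s - 1) * of_real (x powr (a - 1) / (x powr a + 1))) has_integral
          (Gamma s / of_real a powr s * ((1 - 2 powr (1 - s)) * zeta s))) {0<..<1}"
proof -
  define P where "P = (\<lambda>x::real. complex_of_real (- ln x) powr (s - 1))"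
  define F where "F = (\<lambda>x. P x * of_real (x powr (a - 1) / (x powr a + 1)))"
  define H where "H = (\<lambda>x. norm (P x * of_real (x powr (a - 1))))"
  define T where "T = (\<lambda>j x. P x * of_real (x powr (a * (real j + 1) - 1)))"
  define R where "R = (\<lambda>N x. P x * of_real (x powr (a - 1) * (x powr a) ^ (2 * N) / (x powr a + 1)))"
  define I where "I = integral {0<..<1} F"
  have S: "{0<..<1::real} \<in> sets lebesgue" by simp
  have ne: "\<And>x::real. x powr a + 1 \<noteq> 0" by (smt (verit) powr_ge_zero)
  have H_int: "H integrable_on {0<..<1}"
    using mellin_log[OF a s(1)] unfolding H_def P_def absolutely_integrable_on_def by blast
  have F_bound: "norm (F x) \<le> H x" if "x \<in> {0<..<1}" for x
  proof -
    have x: "x > 0" using that by simp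
    have ab: "\<bar>x powr (a - 1) / (x powr a + 1)\<bar> = x powr (a - 1) / (x powr a + 1)"
      by (intro abs_of_nonneg) (simp add: add_nonneg_nonneg)
    have "norm (F x) = norm (P x) * (x powr (a - 1) / (x powr a + 1))"
      unfolding F_def norm_mult norm_of_real ab ..
    also have "\<dots> \<le> norm (P x) * (x powr (a - 1))"
    proof (intro mult_left_mono)
      have "x powr a + 1 \<ge> 1" by simp
      moreover have "x powr (a - 1) \<ge> 0" by simp
      moreover have "0 < (x powr a + 1) * 1" by (simp add: add_nonneg_pos)
      ultimately have "x powr (a - 1) / (x powr a + 1) \<le> x powr (a - 1) / 1"
        by (rule divide_left_mono)
      thus "x powr (a - 1) / (x powr a + 1) \<le> x powr (a - 1)" by simp
    qed simp
    also have "\<dots> = H x" unfolding H_def norm_mult norm_of_real by simp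
    finally show ?thesis .
  qed
  have F_int: "F integrable_on {0<..<1}"
  proof (rule measurable_bounded_by_integrable_imp_integrable[OF _ H_int F_bound S])
    show "F \<in> borel_measurable (lebesgue_on {0<..<1})"
      unfolding F_def P_def
      by (intro continuous_imp_measurable_on_sets_lebesgue S continuous_intros) (auto simp: ln_less_zero ne)
  qed
  have T_int: "(T j has_integral (Gamma s / of_real a powr s * (1 / of_nat (Suc j) powr s))) {0<..<1}" for j
  proof -
    have b: "a * (real j + 1) > 0" using a by simp
    have "(T j has_integral Gamma s / of_real (a * (real j + 1)) powr s) {0<..<1}"
      unfolding T_def P_def by (rule mellin_log_has[OF b s(1)])
    moreover have "complex_of_real (a * (real j + 1)) powr s = of_real a powr s * of_nat (Suc j) powr s"
      using a by (simp add: powr_times_real add.commute)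
    ultimately show ?thesis by (simp add: field_simps)
  qed
  have decomp: "F x = (\<Sum>j<2*N. (-1)^j * T j x) + R N x" if "x \<in> {0<..<1}" for N x
  proof -
    have x: "x > 0" using that by simp
    have pw: "x powr (a * (real j + 1) - 1) = x powr (a - 1) * (x powr a) ^ j" for j
    proof -
      have "x powr (a * (real j + 1) - 1) = x powr (a * real j) * x powr (a - 1)"
        by (simp add: powr_add[symmetric] algebra_simps)
      also have "x powr (a * real j) = (x powr a) ^ j"
        using x by (simp add: powr_powr[symmetric] powr_realpow)
      finally show ?thesis by simp
    qed
    have "x powr (a - 1) / (x powr a + 1) = x powr (a - 1) * (1 / (x powr a + 1))" by simp
    also have "\<dots> = (\<Sum>j<2*N. (-1)^j * x powr (a * (real j + 1) - 1)) + x powr (a - 1) * (x powr a) ^ (2 * N) / (x powr a + 1)"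
      unfolding geo_split[of "x powr a" N, OF powr_ge_zero] pw
      by (simp add: algebra_simps sum_distrib_left)
    finally show ?thesis
      unfolding F_def T_def R_def by (simp add: algebra_simps sum_distrib_left)
  qed
  have R_has: "(R N has_integral (I - (\<Sum>j<2*N. (-1)^j * (Gamma s / of_real a powr s * (1 / of_nat (Suc j) powr s))))) {0<..<1}" for N
  proof -
    have "((\<lambda>x. F x - (\<Sum>j<2*N. (-1)^j * T j x)) has_integral (I - (\<Sum>j<2*N. (-1)^j * (Gamma s / of_real a powr s * (1 / of_nat (Suc j) powr s))))) {0<..<1}"
      unfolding I_def
      by (intro has_integral_diff has_integral_sum has_integral_mult_right T_int integrable_integral F_int) auto
    thus ?thesis
      by (rule has_integral_eq[rotated]) (use decomp in \<open>auto simp: algebra_simps\<close>)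
  qed
  have R_bound: "norm (R N x) \<le> H x" if "x \<in> {0<..<1}" for N x
  proof -
    have x: "x > 0" "x < 1" using that by auto
    have y: "x powr a < 1" "x powr a \<ge> 0" using x a powr_less_mono2[of a x 1] by auto
    have "(x powr a) ^ (2 * N) \<le> 1" using y by (intro power_le_one) auto
    moreover have "(1::real) \<le> x powr a + 1" by simp
    ultimately have le1: "(x powr a) ^ (2 * N) / (x powr a + 1) \<le> 1" by (rule div_le_one_aux)
    have ab: "\<bar>x powr (a - 1) * (x powr a) ^ (2 * N) / (x powr a + 1)\<bar> = x powr (a - 1) * ((x powr a) ^ (2 * N) / (x powr a + 1))"
      using y by (subst abs_of_nonneg) (auto simp: add_nonneg_nonneg)
    have "norm (R N x) = norm (P x) * (x powr (a - 1) * ((x powr a) ^ (2 * N) / (x powr a + 1)))"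
      unfolding R_def norm_mult norm_of_real ab ..
    also have "\<dots> \<le> norm (P x) * (x powr (a - 1) * 1)"
      using le1 by (intro mult_left_mono) auto
    also have "\<dots> = H x" unfolding H_def norm_mult norm_of_real by simp
    finally show ?thesis .
  qed
  have R_pw: "(\<lambda>N. R N x) \<longlonglongrightarrow> 0" if "x \<in> {0<..<1}" for x
  proof -
    have x: "x > 0" "x < 1" using that by auto
    have y: "x powr a < 1" "x powr a \<ge> 0" using x a powr_less_mono2[of a x 1] by auto
    have "(\<lambda>N. (x powr a) ^ (2 * N)) \<longlonglongrightarrow> 0"
      using LIMSEQ_subseq_LIMSEQ[OF LIMSEQ_power_zero[of "x powr a"], of "\<lambda>N. 2 * N"] y
      by (simp add: strict_mono_def o_def)
    hence "(\<lambda>N. P x * of_real (x powr (a - 1) * (x powr a) ^ (2 * N) / (x powr a + 1))) \<longlonglongrightarrow> P x * of_real (x powr (a - 1) * 0 / (x powr a + 1))"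
      by (intro tendsto_intros) (use ne in auto)
    thus ?thesis unfolding R_def by simp
  qed
  have R_int: "R k integrable_on {0<..<1}" for k using R_has by blast
  have R_lim: "(\<lambda>N. integral {0<..<1} (R N)) \<longlonglongrightarrow> integral {0<..<1} (\<lambda>x. 0)"
    using dominated_convergence(2)[of R "{0<..<1}" H "\<lambda>x. 0", OF R_int H_int R_bound R_pw] by simp
  have D0: "(\<lambda>N. I - (\<Sum>j<2*N. (-1)^j * (Gamma s / of_real a powr s * (1 / of_nat (Suc j) powr s)))) \<longlonglongrightarrow> 0"
  proof -
    have RI: "integral {0<..<1} (R N) = I - (\<Sum>j<2*N. (-1)^j * (Gamma s / of_real a powr s * (1 / of_nat (Suc j) powr s)))" for N
      using R_has[of N] by (rule integral_unique)
    show ?thesis using R_lim unfolding RI by simp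
  qed
  have L1: "(\<lambda>N. (\<Sum>j<2*N. (-1)^j * (Gamma s / of_real a powr s * (1 / of_nat (Suc j) powr s)))) \<longlonglongrightarrow> I"
    using tendsto_diff[OF tendsto_const[of I] D0] by simp
  have "(\<lambda>N. Gamma s / of_real a powr s * (\<Sum>j<2*N. (-1)^j / of_nat (Suc j) powr s)) \<longlonglongrightarrow> Gamma s / of_real a powr s * ((1 - 2 powr (1 - s)) * zeta s)"
    by (intro tendsto_intros eta_limit s)
  moreover have "Gamma s / of_real a powr s * (\<Sum>j<2*N. (-1)^j / of_nat (Suc j) powr s) = (\<Sum>j<2*N. (-1)^j * (Gamma s / of_real a powr s * (1 / of_nat (Suc j) powr s)))" for N
    by (simp add: sum_distrib_left algebra_simps)
  ultimately have L2: "(\<lambda>N. (\<Sum>j<2*N. (-1)^j * (Gamma s / of_real a powr s * (1 / of_nat (Suc j) powr s)))) \<longlonglongrightarrow> Gamma s / of_real a powr s * ((1 - 2 powr (1 - s)) * zeta s)"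
    by simp
  have eqI: "I = Gamma s / of_real a powr s * ((1 - 2 powr (1 - s)) * zeta s)"
    using LIMSEQ_unique[OF L1 L2] .
  have "(F has_integral I) {0<..<1}" unfolding I_def using F_int by (rule integrable_integral)
  hence "(F has_integral (Gamma s / of_real a powr s * ((1 - 2 powr (1 - s)) * zeta s))) {0<..<1}"
    by (simp only: eqI)
  thus ?thesis unfolding F_def P_def .
qed




lemma ln_powr_neg:
  fixes x :: real assumes "0 < x" "x < 1"
  shows "complex_of_real (ln x) powr w = exp (\<i> * of_real pi * w) * of_real (- ln x) powr w"
proof -
  have l: "ln x < 0" using assms by (simp add: ln_less_zero)
  have "complex_of_real (ln x) powr w = exp (w * (of_real (ln (- ln x)) + of_real pi * \<i>))"
    using l by (simp add: powr_def Ln_of_real')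
  also have "\<dots> = exp (\<i> * of_real pi * w) * exp (w * of_real (ln (- ln x)))"
    by (simp add: exp_add[symmetric] algebra_simps)
  also have "exp (w * of_real (ln (- ln x))) = of_real (- ln x) powr w"
    using l cpow_pos[of "- ln x" w] by simp
  finally show ?thesis .
qed

lemma rhs_piece:
  fixes a :: real and k :: complex assumes a: "a > 0"
  shows "exp (\<i> * of_real pi * k / 2) * ((\<i> / of_real a) powr k / of_real (a^2))
       = exp (\<i> * of_real pi * k) / of_real a powr (k + 2)"
proof -
  have e: "\<i> / of_real a = of_real (1 / a) * \<i>" by (simp add: field_simps)
  have Ln: "Ln (\<i> / of_real a) = - of_real (ln a) + \<i> * of_real pi / 2"
  proof -
    have "Ln (of_real (1 / a) * \<i>) = Ln (of_real (1 / a)) + Ln \<i>"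
      using a by (intro Ln_times_of_real) auto
    also have "Ln (of_real (1 / a)) = of_real (ln (1 / a))" using a by (intro Ln_of_real) simp
    finally show ?thesis unfolding e using a by (simp add: ln_div Ln_ii)
  qed
  have "(\<i> / of_real a) powr k = exp (k * (- of_real (ln a) + \<i> * of_real pi / 2))"
    unfolding powr_def Ln using a by simp
  moreover have "complex_of_real (a^2) = exp (2 * of_real (ln a))"
  proof -
    have "exp (2 * complex_of_real (ln a)) = exp (of_real (ln a)) * exp (of_real (ln a))"
      by (simp only: mult_2 exp_add)
    thus ?thesis using a by (simp add: exp_of_real power2_eq_square)
  qed
  moreover have "complex_of_real a powr (k + 2) = exp ((k + 2) * of_real (ln a))"
    using a by (simp add: cpow_pos)
  ultimately have "exp (\<i> * of_real pi * k / 2) * ((\<i> / of_real a) powr k / of_real (a^2))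
     = exp (\<i> * of_real pi * k / 2) * exp (k * (- of_real (ln a) + \<i> * of_real pi / 2)) / exp (2 * of_real (ln a))
     \<and> complex_of_real a powr (k + 2) = exp ((k + 2) * of_real (ln a))" by simp
  moreover have "exp (\<i> * of_real pi * k / 2) * exp (k * (- of_real (ln a) + \<i> * of_real pi / 2)) / exp (2 * of_real (ln a))
     = exp (\<i> * of_real pi * k / 2 + k * (- of_real (ln a) + \<i> * of_real pi / 2) - 2 * of_real (ln a))"
    by (simp only: exp_add exp_diff)
  moreover have "exp (\<i> * of_real pi * k) / exp ((k + 2) * of_real (ln a))
     = exp (\<i> * of_real pi * k - (k + 2) * of_real (ln a))"
    by (simp only: exp_diff)
  moreover have "\<i> * of_real pi * k / 2 + k * (- of_real (ln a) + \<i> * of_real pi / 2) - 2 * of_real (ln a)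
     = \<i> * of_real pi * k - (k + 2) * (of_real (ln a) :: complex)"
    by (simp add: field_simps)
  ultimately show ?thesis by simp
qed




theorem mainTheorem17:
  fixes m p :: real and k :: complex
  assumes "m > -1" and "p > -1" and "Re k > -2" and "k \<noteq> -1"
  shows "((\<lambda>x::real. (of_real (ln x)) powr (k + 1) * of_real (x powr m - x powr p)
            / of_real ((x powr (m + 1) + 1) * (x powr (p + 1) + 1)))
          has_integral
          (- ((2::complex) powr (- k - 1)) * ((2::complex) powr (k + 1) - 1)
             * exp (\<i> * of_real pi * k / 2) * zeta (k + 2) * Gamma (k + 2)
             * ((\<i> / of_real (m + 1)) powr k / of_real ((m + 1)^2)
                - (\<i> / of_real (p + 1)) powr k / of_real ((p + 1)^2))))
         {0<..<1}"
proof -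
  define s where "s = k + 2"
  have s: "Re s > 0" "s \<noteq> 1" using assms unfolding s_def by (auto simp: add_eq_0_iff)
  have a: "m + 1 > 0" and b: "p + 1 > 0" using assms by auto
  define E where "E = exp (\<i> * of_real pi * (k + 1))"
  define V where "V = (\<lambda>c::real. Gamma s / of_real c powr s * ((1 - 2 powr (1 - s)) * zeta s))"
  have Ia: "((\<lambda>x. of_real (- ln x) powr (s - 1) * of_real (x powr m / (x powr (m + 1) + 1))) has_integral V (m + 1)) {0<..<1}"
    using log_int_piece[OF a s] unfolding V_def by simp
  have Ib: "((\<lambda>x. of_real (- ln x) powr (s - 1) * of_real (x powr p / (x powr (p + 1) + 1))) has_integral V (p + 1)) {0<..<1}"
    using log_int_piece[OF b s] unfolding V_def by simp
  have I: "((\<lambda>x. E * (of_real (- ln x) powr (s - 1) * of_real (x powr m / (x powr (m + 1) + 1))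
       - of_real (- ln x) powr (s - 1) * of_real (x powr p / (x powr (p + 1) + 1)))) has_integral E * (V (m + 1) - V (p + 1))) {0<..<1}"
    by (intro has_integral_mult_right has_integral_diff Ia Ib)
  have pt: "(of_real (ln x)) powr (k + 1) * of_real (x powr m - x powr p)
            / of_real ((x powr (m + 1) + 1) * (x powr (p + 1) + 1))
          = E * (of_real (- ln x) powr (s - 1) * of_real (x powr m / (x powr (m + 1) + 1))
       - of_real (- ln x) powr (s - 1) * of_real (x powr p / (x powr (p + 1) + 1)))" if x: "x \<in> {0<..<1}" for x
  proof -
    have x0: "x > 0" "x < 1" using x by auto
    have ne1: "x powr (m + 1) + 1 \<noteq> 0" "x powr (p + 1) + 1 \<noteq> 0" by (smt (verit) powr_ge_zero)+
    have r: "(x powr m - x powr p) / ((x powr (m + 1) + 1) * (x powr (p + 1) + 1))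
       = x powr m / (x powr (m + 1) + 1) - x powr p / (x powr (p + 1) + 1)"
    proof -
      have "x powr m * x powr (p + 1) = x powr p * x powr (m + 1)"
        by (simp add: powr_add[symmetric] algebra_simps)
      thus ?thesis using ne1 by (simp add: field_simps)
    qed
    have h1: "(of_real (ln x)) powr (k + 1) = E * of_real (- ln x) powr (s - 1)"
      unfolding E_def s_def using ln_powr_neg[OF x0, of "k + 1"] by (simp add: add.commute)
    have h2: "complex_of_real (x powr m - x powr p) / of_real ((x powr (m + 1) + 1) * (x powr (p + 1) + 1))
       = of_real (x powr m / (x powr (m + 1) + 1)) - of_real (x powr p / (x powr (p + 1) + 1))"
      by (simp only: of_real_divide[symmetric] of_real_diff[symmetric] r)
    have "(of_real (ln x)) powr (k + 1) * of_real (x powr m - x powr p)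
            / of_real ((x powr (m + 1) + 1) * (x powr (p + 1) + 1))
       = (of_real (ln x)) powr (k + 1) * (of_real (x powr m - x powr p)
            / of_real ((x powr (m + 1) + 1) * (x powr (p + 1) + 1)))"
      by (rule times_divide_eq_right[symmetric])
    also have "\<dots> = E * of_real (- ln x) powr (s - 1) * (of_real (x powr m / (x powr (m + 1) + 1)) - of_real (x powr p / (x powr (p + 1) + 1)))"
      unfolding h1 h2 ..
    finally show ?thesis by (simp only: right_diff_distrib mult.assoc)
  qed
  have val: "E * (V (m + 1) - V (p + 1)) =
          (- ((2::complex) powr (- k - 1)) * ((2::complex) powr (k + 1) - 1)
             * exp (\<i> * of_real pi * k / 2) * zeta (k + 2) * Gamma (k + 2)
             * ((\<i> / of_real (m + 1)) powr k / of_real ((m + 1)^2)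
                - (\<i> / of_real (p + 1)) powr k / of_real ((p + 1)^2)))"
  proof -
    have t1: "(2::complex) powr (- k - 1) * 2 powr (k + 1) = 1"
    proof -
      have "(2::complex) powr (- k - 1) * 2 powr (k + 1) = exp ((- k - 1) * of_real (ln 2) + (k + 1) * of_real (ln 2))"
        using cpow_pos[of 2 "- k - 1"] cpow_pos[of 2 "k + 1"] by (simp add: exp_add)
      also have "(- k - 1) * of_real (ln 2) + (k + 1) * of_real (ln 2) = (0::complex)"
        by (simp add: algebra_simps)
      finally show ?thesis by simp
    qed
    have t2: "(2::complex) powr (1 - s) = 2 powr (- k - 1)"
    proof -
      have "1 - s = - k - 1" unfolding s_def by simp
      thus ?thesis by (simp only:)
    qed
    have E2: "E = - exp (\<i> * of_real pi * k)"
      unfolding E_def by (simp add: algebra_simps exp_add)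
    have ra: "exp (\<i> * of_real pi * k / 2) * ((\<i> / of_real (m + 1)) powr k / of_real ((m + 1)^2))
       = exp (\<i> * of_real pi * k) / of_real (m + 1) powr s"
      unfolding s_def using rhs_piece[OF a] by simp
    have rb: "exp (\<i> * of_real pi * k / 2) * ((\<i> / of_real (p + 1)) powr k / of_real ((p + 1)^2))
       = exp (\<i> * of_real pi * k) / of_real (p + 1) powr s"
      unfolding s_def using rhs_piece[OF b] by simp
    have "(- ((2::complex) powr (- k - 1)) * ((2::complex) powr (k + 1) - 1)
             * exp (\<i> * of_real pi * k / 2) * zeta (k + 2) * Gamma (k + 2)
             * ((\<i> / of_real (m + 1)) powr k / of_real ((m + 1)^2)
                - (\<i> / of_real (p + 1)) powr k / of_real ((p + 1)^2)))
       = - (2 powr (- k - 1) * 2 powr (k + 1) - 2 powr (- k - 1)) * zeta s * Gamma s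
          * (exp (\<i> * of_real pi * k / 2) * ((\<i> / of_real (m + 1)) powr k / of_real ((m + 1)^2))
             - exp (\<i> * of_real pi * k / 2) * ((\<i> / of_real (p + 1)) powr k / of_real ((p + 1)^2)))"
      unfolding s_def by (simp add: algebra_simps)
    also have "\<dots> = - (1 - 2 powr (1 - s)) * zeta s * Gamma s
          * (exp (\<i> * of_real pi * k) / of_real (m + 1) powr s - exp (\<i> * of_real pi * k) / of_real (p + 1) powr s)"
      unfolding t1 t2 ra rb ..
    also have "\<dots> = E * (V (m + 1) - V (p + 1))"
      unfolding E2 V_def by (simp add: algebra_simps)
    finally show ?thesis by simp
  qed
  show ?thesis
    unfolding val[symmetric]
    by (rule has_integral_eq[OF _ I]) (rule pt[symmetric])
qed


end
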